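(* Let $G=(N,E)$ be a finite graph and $r\ge 1$, $\varepsilon\ge 0$. Suppose $G$ is $(\varepsilon,r)$-amenable. Then there exists an action-symmetric leader equilibrium of the local-communication coordination game on $G$ with radius of communication $r$ whose expected inefficiency is at most $\varepsilon$.
   Context: Graph conventions: $N$ is a finite set of agents, $E\subseteq N\times N$ is a set of ordered pairs with $(i,j)\in E$ iff $(j,i)\in E$ and $(i,i)\notin E$. $N_i=\{j:(i,j)\in E\}$. $B_r(i)$ is the set of agents at graph distance at most $r$ from $i$. A set $C\subseteq N$ has radius at most $r$ if there is $i\in C$ with $C\subseteq B_r(i)$. $(\varepsilon,r)$-amenability: $G$ is $(\varepsilon,r)$-amenable if there is a partition of $N$ into connected sets of radius at most $r$ such that the number of pairs $(i,j)\in E$ with $i,j$ in different parts is at most $\varepsilon|E|$. The game: actions $A=\{-1,+1\}$; utility of agent $i$ under action profile $a$ is $u_i(a)=-\sum_{j\in N_i}|a_i-a_j|$. Let $\mathcal{A}$ be a finite alphabet containing the letters $-1,+1,\emptyset$, and the message space is $\mathcal{M}=\mathcal{A}^{\mathbb{N}}$; a letter $\alpha$ is identified with the message $(\alpha,\emptyset,\emptyset,\dots)$, and $\emptyset$ denotes the empty message. With radius of communication $r$: (1) each agent $i$ simultaneously sends a locally public message $m_i\in\mathcal{M}$, observed by all agents in $B_r(i)$, and a private message $\hat m_{i,j}\in\mathcal{M}$ to each $j\in B_r(i)$; (2) agent $i$ observes $(m_j)_{j\in B_r(i)}$ and $(\hat m_{j,i})_{j\in B_r(i)}$; (3) agent $i$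 chooses $a_i\in A$. A pure strategy is $\sigma_i=(m_i,(\hat m_{i,j})_{j\in B_r(i)},o_i)$ where $o_i$ is a measurable map from received messages to $A$; mixed strategies are independent (across agents) random pure strategies. An equilibrium is a (mixed) Nash equilibrium of this game. The inefficiency of the realized action profile is $I=\frac{2}{|E|}\sum_{(i,j)\in E}\mathbf 1_{a_i\neq a_j}$; expected inefficiency is $\mathbb E[I]$. Action symmetry: negation on $\mathcal{A}$ swaps $-1$ and $+1$ and fixes all other letters; it is extended coordinatewise to messages and tuples of messages. For a map $f$ between such spaces, $\iota(f)(x)=-f(-x)$. For a pure strategy, $\iota(\sigma_i)=(-m_i,-\hat m_{i\to},\iota(o_i))$. A mixed strategy $\sigma_i$ is action-symmetric if $\sigma_i$ and $\iota(\sigma_i)$ have the same distribution; a profile is action-symmetric if every agent's strategy is. Leader equilibrium (private-message form): given a partition of $N$ into communities $C_1,C_2,\dots$ of radius at most $r$ and leaders $\ell_k\in C_k$ with $C_k\subseteq B_r(\ell_k)$: all public messages are empty; each leader $\ell_k$ draws one uniform message in $\{-1,+1\}$ and sends it privately to every member of $C_k$, sending empty private messages to all others; non-leaders send empty messages; each $i\in C_k$ takes $a_i=\hat m_{\ell_k,i}$ (messages not from one's leader or not in $\{-1,+1\}$ are ignored, and an agent who receives no message in $\{-1,+1\}$ from their leader chooses uniformly at random). A leader equilibrium is such a profile that is an equilibrium. *)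

theory Defs
  imports "HOL-Probability.Probability" "HOL-Library.Disjoint_Sets"
begin

definition graph :: "'a set \<Rightarrow> ('a \<times> 'a) set \<Rightarrow> bool" where
  "graph N E \<longleftrightarrow> finite N \<and> E \<subseteq> N \<times> N \<and> sym E \<and> (\<forall>i. (i, i) \<notin> E)"

definition nbrs :: "('a \<times> 'a) set \<Rightarrow> 'a \<Rightarrow> 'a set" where
  "nbrs E i = {j. (i, j) \<in> E}"

definition ball :: "('a \<times> 'a) set \<Rightarrow> nat \<Rightarrow> 'a \<Rightarrow> 'a set" where
  "ball E r i = {j. \<exists>k\<le>r. (i, j) \<in> E ^^ k}"

definition radius_le :: "('a \<times> 'a) set \<Rightarrow> nat \<Rightarrow> 'a set \<Rightarrow> bool" where
  "radius_le E r C \<longleftrightarrow> (\<exists>i\<in>C. C \<subseteq> ball E r i)"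

definition connected_set :: "('a \<times> 'a) set \<Rightarrow> 'a set \<Rightarrow> bool" where
  "connected_set E C \<longleftrightarrow> (\<forall>i\<in>C. \<forall>j\<in>C. (i, j) \<in> (E \<inter> (C \<times> C))\<^sup>*)"

definition cut_edges :: "('a \<times> 'a) set \<Rightarrow> 'a set set \<Rightarrow> ('a \<times> 'a) set" where
  "cut_edges E P = {(i, j) \<in> E. \<not> (\<exists>C\<in>P. i \<in> C \<and> j \<in> C)}"

definition amenable :: "'a set \<Rightarrow> ('a \<times> 'a) set \<Rightarrow> real \<Rightarrow> nat \<Rightarrow> bool" where
  "amenable N E \<epsilon> r \<longleftrightarrow>
     (\<exists>P. partition_on N P \<and> (\<forall>C\<in>P. connected_set E C \<and> radius_le E r C)
        \<and> real (card (cut_edges E P)) \<le> \<epsilon> * real (card E))"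

datatype act = Minus | Plus

fun aval :: "act \<Rightarrow> int" where
  "aval Minus = -1" | "aval Plus = 1"

fun flip :: "act \<Rightarrow> act" where
  "flip Minus = Plus" | "flip Plus = Minus"

text \<open>The alphabet is a finite type 'l with three distinguished distinct letters
  neg (= -1), pos (= +1), emp (= the empty letter). Messages are sequences of letters.\<close>

type_synonym 'l msg = "nat \<Rightarrow> 'l"

definition letter_msg :: "'l \<Rightarrow> 'l \<Rightarrow> 'l msg" where
  "letter_msg emp \<alpha> = (\<lambda>n. if n = 0 then \<alpha> else emp)"

definition empty_msg :: "'l \<Rightarrow> 'l msg" where
  "empty_msg emp = (\<lambda>_. emp)"

definition neg_letter :: "'l \<Rightarrow> 'l \<Rightarrow> 'l \<Rightarrow> 'l" where
  "neg_letter neg pos x = (if x = neg then pos else if x = pos then neg else x)"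

definition neg_msg :: "'l \<Rightarrow> 'l \<Rightarrow> 'l msg \<Rightarrow> 'l msg" where
  "neg_msg neg pos m = (\<lambda>n. neg_letter neg pos (m n))"

definition neg_msgs :: "'l \<Rightarrow> 'l \<Rightarrow> ('a \<Rightarrow> 'l msg) \<Rightarrow> ('a \<Rightarrow> 'l msg)" where
  "neg_msgs neg pos ms = (\<lambda>j. neg_msg neg pos (ms j))"

text \<open>A pure strategy: a locally public message, private messages to each agent
  (only those to agents in B_r(i) are ever observed), and an action rule mapping
  the observed public messages and received private messages (indexed by sender)
  to an action.\<close>

record ('a, 'l) strat =
  pub :: "'l msg"
  priv :: "'a \<Rightarrow> 'l msg"
  out :: "('a \<Rightarrow> 'l msg) \<Rightarrow> ('a \<Rightarrow> 'l msg) \<Rightarrow> act"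

definition iota :: "'l \<Rightarrow> 'l \<Rightarrow> ('a, 'l) strat \<Rightarrow> ('a, 'l) strat" where
  "iota neg pos s =
     \<lparr> pub = neg_msg neg pos (pub s),
       priv = neg_msgs neg pos (priv s),
       out = (\<lambda>ps qs. flip (out s (neg_msgs neg pos ps) (neg_msgs neg pos qs))) \<rparr>"

definition recv_pub :: "('a \<times> 'a) set \<Rightarrow> nat \<Rightarrow> 'l \<Rightarrow> ('a \<Rightarrow> ('a, 'l) strat) \<Rightarrow> 'a \<Rightarrow> ('a \<Rightarrow> 'l msg)" where
  "recv_pub E r emp s i = (\<lambda>j. if j \<in> ball E r i then pub (s j) else empty_msg emp)"

definition recv_priv :: "('a \<times> 'a) set \<Rightarrow> nat \<Rightarrow> 'l \<Rightarrow> ('a \<Rightarrow> ('a, 'l) strat) \<Rightarrow> 'a \<Rightarrow> ('a \<Rightarrow> 'l msg)" where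
  "recv_priv E r emp s i = (\<lambda>j. if j \<in> ball E r i then priv (s j) i else empty_msg emp)"

definition actions :: "('a \<times> 'a) set \<Rightarrow> nat \<Rightarrow> 'l \<Rightarrow> ('a \<Rightarrow> ('a, 'l) strat) \<Rightarrow> ('a \<Rightarrow> act)" where
  "actions E r emp s = (\<lambda>i. out (s i) (recv_pub E r emp s i) (recv_priv E r emp s i))"

definition utility :: "('a \<times> 'a) set \<Rightarrow> 'a \<Rightarrow> ('a \<Rightarrow> act) \<Rightarrow> real" where
  "utility E i a = - (\<Sum>j\<in>nbrs E i. real_of_int \<bar>aval (a i) - aval (a j)\<bar>)"

definition inefficiency :: "('a \<times> 'a) set \<Rightarrow> ('a \<Rightarrow> act) \<Rightarrow> real" where
  "inefficiency E a = 2 / real (card E) * (\<Sum>(i, j)\<in>E. if a i \<noteq> a j then 1 else 0)"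

definition profile_pmf :: "'a set \<Rightarrow> ('a \<Rightarrow> ('a, 'l) strat pmf) \<Rightarrow> ('a \<Rightarrow> ('a, 'l) strat) pmf" where
  "profile_pmf N \<sigma> = Pi_pmf N undefined \<sigma>"

definition exp_utility :: "'a set \<Rightarrow> ('a \<times> 'a) set \<Rightarrow> nat \<Rightarrow> 'l \<Rightarrow> ('a \<Rightarrow> ('a, 'l) strat pmf) \<Rightarrow> 'a \<Rightarrow> real" where
  "exp_utility N E r emp \<sigma> i =
     measure_pmf.expectation (profile_pmf N \<sigma>) (\<lambda>s. utility E i (actions E r emp s))"

definition exp_inefficiency :: "'a set \<Rightarrow> ('a \<times> 'a) set \<Rightarrow> nat \<Rightarrow> 'l \<Rightarrow> ('a \<Rightarrow> ('a, 'l) strat pmf) \<Rightarrow> real" where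
  "exp_inefficiency N E r emp \<sigma> =
     measure_pmf.expectation (profile_pmf N \<sigma>) (\<lambda>s. inefficiency E (actions E r emp s))"

definition equilibrium :: "'a set \<Rightarrow> ('a \<times> 'a) set \<Rightarrow> nat \<Rightarrow> 'l \<Rightarrow> ('a \<Rightarrow> ('a, 'l) strat pmf) \<Rightarrow> bool" where
  "equilibrium N E r emp \<sigma> \<longleftrightarrow>
     (\<forall>i\<in>N. \<forall>\<tau>. exp_utility N E r emp (\<sigma>(i := \<tau>)) i \<le> exp_utility N E r emp \<sigma> i)"

definition action_symmetric :: "'a set \<Rightarrow> 'l \<Rightarrow> 'l \<Rightarrow> ('a \<Rightarrow> ('a, 'l) strat pmf) \<Rightarrow> bool" where
  "action_symmetric N neg pos \<sigma> \<longleftrightarrow> (\<forall>i\<in>N. map_pmf (iota neg pos) (\<sigma> i) = \<sigma> i)"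

definition letter_of :: "'l \<Rightarrow> 'l \<Rightarrow> act \<Rightarrow> 'l" where
  "letter_of neg pos b = (case b of Minus \<Rightarrow> neg | Plus \<Rightarrow> pos)"

definition follow_rule :: "'l \<Rightarrow> 'l \<Rightarrow> 'l \<Rightarrow> 'a \<Rightarrow> act \<Rightarrow> ('a \<Rightarrow> 'l msg) \<Rightarrow> ('a \<Rightarrow> 'l msg) \<Rightarrow> act" where
  "follow_rule neg pos emp l c = (\<lambda>ps qs.
     if qs l = letter_msg emp pos then Plus
     else if qs l = letter_msg emp neg then Minus
     else c)"

definition coin :: "act pmf" where
  "coin = pmf_of_set {Minus, Plus}"

definition follower_mixed :: "'l \<Rightarrow> 'l \<Rightarrow> 'l \<Rightarrow> 'a \<Rightarrow> ('a, 'l) strat pmf" where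
  "follower_mixed neg pos emp l =
     map_pmf (\<lambda>c. \<lparr> pub = empty_msg emp, priv = (\<lambda>_. empty_msg emp),
                     out = follow_rule neg pos emp l c \<rparr>) coin"

definition leader_mixed :: "'l \<Rightarrow> 'l \<Rightarrow> 'l \<Rightarrow> 'a set \<Rightarrow> 'a \<Rightarrow> ('a, 'l) strat pmf" where
  "leader_mixed neg pos emp C l =
     map_pmf (\<lambda>(b, c). \<lparr> pub = empty_msg emp,
                          priv = (\<lambda>j. if j \<in> C then letter_msg emp (letter_of neg pos b) else empty_msg emp),
                          out = follow_rule neg pos emp l c \<rparr>) (pair_pmf coin coin)"

definition leader_profile ::
  "'a set \<Rightarrow> ('a \<times> 'a) set \<Rightarrow> nat \<Rightarrow> 'l \<Rightarrow> 'l \<Rightarrow> 'l \<Rightarrow> 'a set set \<Rightarrow> ('a set \<Rightarrow> 'a)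
     \<Rightarrow> ('a \<Rightarrow> ('a, 'l) strat pmf) \<Rightarrow> bool" where
  "leader_profile N E r neg pos emp P ld \<sigma> \<longleftrightarrow>
     partition_on N P \<and>
     (\<forall>C\<in>P. ld C \<in> C \<and> C \<subseteq> ball E r (ld C)) \<and>
     (\<forall>C\<in>P. \<forall>i\<in>C. \<sigma> i = (if i = ld C then leader_mixed neg pos emp C i
                                        else follower_mixed neg pos emp (ld C)))"

end

theory Submission imports Defs begin

lemma relpow_sym:
  assumes "sym E" shows "(i, j) \<in> E ^^ k \<Longrightarrow> (j, i) \<in> E ^^ k"
proof (induction k arbitrary: i j)
  case 0 then show ?case by simp
next
  case (Suc k)
  then obtain m where "(i, m) \<in> E ^^ k" "(m, j) \<in> E" by auto
  then have "(m, i) \<in> E ^^ k" "(j, m) \<in> E" using Suc.IH assms by (auto dest: symD)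
  then show ?case by (meson relpow_Suc_I2)
qed

lemma ball_sym: "sym E \<Longrightarrow> j \<in> ball E r i \<Longrightarrow> i \<in> ball E r j"
proof -
  assume s: "sym E" and j: "j \<in> ball E r i"
  then obtain k where "k \<le> r" "(i, j) \<in> E ^^ k" unfolding ball_def by auto
  then have "k \<le> r" "(j, i) \<in> E ^^ k" using relpow_sym[OF s] by auto
  then show ?thesis unfolding ball_def by auto
qed

lemma ball_self: "i \<in> ball E r i"
  unfolding ball_def by auto

lemma letter_msg_inj: "letter_msg emp a = letter_msg emp b \<longleftrightarrow> a = b"
  unfolding letter_msg_def by (metis)

lemma neg_letter_invol: "neg_letter neg pos (neg_letter neg pos x) = x"
  unfolding neg_letter_def by auto

lemma neg_msg_invol: "neg_msg neg pos (neg_msg neg pos m) = m"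
  unfolding neg_msg_def by (simp add: neg_letter_invol)

lemma neg_msg_letter: "neg \<noteq> emp \<Longrightarrow> pos \<noteq> emp \<Longrightarrow>
   neg_msg neg pos (letter_msg emp a) = letter_msg emp (neg_letter neg pos a)"
  unfolding neg_msg_def letter_msg_def neg_letter_def by auto

lemma neg_msg_empty: "neg \<noteq> emp \<Longrightarrow> pos \<noteq> emp \<Longrightarrow>
   neg_msg neg pos (empty_msg emp) = empty_msg emp"
  unfolding neg_msg_def empty_msg_def neg_letter_def by auto

lemma neg_msg_eq_letter:
  assumes "neg \<noteq> emp" "pos \<noteq> emp"
  shows "neg_msg neg pos m = letter_msg emp a \<longleftrightarrow> m = letter_msg emp (neg_letter neg pos a)"
  using neg_msg_invol[of neg pos m] neg_msg_letter[OF assms, of a] neg_msg_invol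
  by metis

lemma flip_follow:
  assumes "neg \<noteq> pos" "neg \<noteq> emp" "pos \<noteq> emp"
  shows "(\<lambda>ps qs. flip (follow_rule neg pos emp l c (neg_msgs neg pos ps) (neg_msgs neg pos qs)))
         = follow_rule neg pos emp l (flip c)"
proof (intro ext)
  fix ps qs
  have np: "neg_letter neg pos pos = neg" "neg_letter neg pos neg = pos"
    unfolding neg_letter_def using assms by auto
  have d: "letter_msg emp pos \<noteq> letter_msg emp neg" using assms letter_msg_inj by metis
  show "flip (follow_rule neg pos emp l c (neg_msgs neg pos ps) (neg_msgs neg pos qs))
         = follow_rule neg pos emp l (flip c) ps qs"
    unfolding follow_rule_def neg_msgs_def
    using neg_msg_eq_letter[OF assms(2,3), of "qs l"] np d
    by (cases c) auto
qed

lemma map_flip_coin: "map_pmf flip coin = coin"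
proof -
  have "inj_on flip {Minus, Plus}" by (auto simp: inj_on_def elim: flip.elims)
  then show ?thesis unfolding coin_def
    by (subst map_pmf_of_set_inj) (auto simp: insert_commute)
qed

lemma flip_flip [simp]: "flip (flip x) = x" by (cases x) auto


lemma map_ne_coin: "map_pmf (\<lambda>b. g \<noteq> b) coin = pmf_of_set UNIV"
proof -
  have "inj_on (\<lambda>b. g \<noteq> b) {Minus, Plus}" by (cases g) (auto simp: inj_on_def)
  moreover have "(\<lambda>b. g \<noteq> b) ` {Minus, Plus} = UNIV" by (cases g) auto
  ultimately show ?thesis unfolding coin_def
    by (subst map_pmf_of_set_inj) auto
qed

lemma pair_coin_ne: "map_pmf (\<lambda>(b, g). g \<noteq> b) (pair_pmf coin Q) = pmf_of_set UNIV"
proof -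
  have "map_pmf (\<lambda>(b, g). g \<noteq> b) (pair_pmf coin Q)
      = map_pmf (\<lambda>(g, b). g \<noteq> b) (pair_pmf Q coin)"
    by (subst pair_commute_pmf) (simp add: pmf.map_comp o_def case_prod_unfold)
  also have "\<dots> = bind_pmf Q (\<lambda>g. map_pmf (\<lambda>b. g \<noteq> b) coin)"
    unfolding pair_pmf_def map_bind_pmf
    by (simp add: map_pmf_def bind_assoc_pmf bind_return_pmf)
  also have "\<dots> = pmf_of_set UNIV" by (simp add: map_ne_coin bind_pmf_const)
  finally show ?thesis .
qed

context
  fixes N :: "'a set" and E r and neg pos emp :: 'l and P ld
    and \<sigma> :: "'a \<Rightarrow> ('a, 'l) strat pmf"
  assumes G: "graph N E" and np: "neg \<noteq> pos" and ne: "neg \<noteq> emp" and pe: "pos \<noteq> emp"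
    and LP: "leader_profile N E r neg pos emp P ld \<sigma>"
begin

definition LS where "LS C l b c = \<lparr> pub = empty_msg emp,
   priv = (\<lambda>j. if j \<in> C then letter_msg emp (letter_of neg pos b) else empty_msg emp),
   out = follow_rule neg pos emp l c \<rparr>"

definition FS where "FS l c = \<lparr> pub = empty_msg emp, priv = (\<lambda>_. empty_msg emp),
   out = follow_rule neg pos emp l c \<rparr>"

definition hb where "hb j t = (if priv t j = letter_msg emp pos then Plus else Minus)"

lemma finN: "finite N" using G unfolding graph_def by auto
lemma symE: "sym E" using G unfolding graph_def by auto
lemma part: "partition_on N P" using LP unfolding leader_profile_def by auto
lemma ldC: "C \<in> P \<Longrightarrow> ld C \<in> C \<and> C \<subseteq> ball E r (ld C)"
  using LP unfolding leader_profile_def by auto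
lemma sig: "C \<in> P \<Longrightarrow> i \<in> C \<Longrightarrow> \<sigma> i = (if i = ld C then leader_mixed neg pos emp C i
                                        else follower_mixed neg pos emp (ld C))"
  using LP unfolding leader_profile_def by auto
lemma CsubN: "C \<in> P \<Longrightarrow> C \<subseteq> N" using part unfolding partition_on_def by auto
lemma Cuniq: "C \<in> P \<Longrightarrow> C' \<in> P \<Longrightarrow> i \<in> C \<Longrightarrow> i \<in> C' \<Longrightarrow> C = C'"
  using part unfolding partition_on_def disjoint_def by auto
lemma exC: "i \<in> N \<Longrightarrow> \<exists>C\<in>P. i \<in> C" using part unfolding partition_on_def by auto

lemma set_leader: "y \<in> set_pmf (leader_mixed neg pos emp C l) \<Longrightarrow> \<exists>b c. y = LS C l b c"
  unfolding leader_mixed_def LS_def by auto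

lemma set_follower: "y \<in> set_pmf (follower_mixed neg pos emp l) \<Longrightarrow> \<exists>c. y = FS l c"
  unfolding follower_mixed_def FS_def by auto

lemma support: "s \<in> set_pmf (profile_pmf N \<sigma>') \<Longrightarrow> k \<in> N \<Longrightarrow> s k \<in> set_pmf (\<sigma>' k)"
  unfolding profile_pmf_def using finN by (auto simp: set_Pi_pmf PiE_dflt_def)

lemma act_member:
  assumes s: "s \<in> set_pmf (profile_pmf N \<sigma>')" and C: "C \<in> P" "j \<in> C"
    and e1: "\<sigma>' j = \<sigma> j" and e2: "\<sigma>' (ld C) = \<sigma> (ld C)"
  shows "actions E r emp s j = hb j (s (ld C))"
proof -
  define l where "l = ld C"
  have l: "l \<in> C" "C \<subseteq> ball E r l" using ldC[OF C(1)] l_def by auto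
  have N: "l \<in> N" "j \<in> N" using CsubN[OF C(1)] l C by auto
  have "s l \<in> set_pmf (\<sigma> l)" using support[OF s N(1)] e2 l_def by simp
  then obtain b c where b: "s l = LS C l b c" using set_leader[of "s l" C l] sig[OF C(1) l(1)] l_def by auto
  have "\<exists>c'. out (s j) = follow_rule neg pos emp l c'"
  proof (cases "j = l")
    case True then show ?thesis using b by (auto simp: LS_def)
  next
    case False
    have "s j \<in> set_pmf (\<sigma> j)" using support[OF s N(2)] e1 by simp
    then obtain c' where "s j = FS l c'" using set_follower[of "s j" l] sig[OF C] False l_def by auto
    then show ?thesis by (auto simp: FS_def)
  qed
  then obtain c' where c': "out (s j) = follow_rule neg pos emp l c'" by blast
  have lb: "l \<in> ball E r j" using ball_sym[OF symE] l C by auto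
  have rp: "recv_priv E r emp s j l = letter_msg emp (letter_of neg pos b)"
    unfolding recv_priv_def using lb b C by (simp add: LS_def)
  have d: "letter_msg emp pos \<noteq> letter_msg emp neg" using np letter_msg_inj by metis
  show ?thesis
    unfolding actions_def c' follow_rule_def rp hb_def l_def[symmetric] b
    using d C by (cases b) (auto simp: LS_def letter_of_def)
qed

lemma map_hb: "j \<in> C \<Longrightarrow> map_pmf (hb j) (leader_mixed neg pos emp C l) = coin"
proof -
  assume j: "j \<in> C"
  have d: "letter_msg emp pos \<noteq> letter_msg emp neg" using np letter_msg_inj by metis
  have "map_pmf (hb j) (leader_mixed neg pos emp C l) = map_pmf fst (pair_pmf coin coin)"
    unfolding leader_mixed_def pmf.map_comp
    by (intro map_pmf_cong refl) (use j d in \<open>auto simp: hb_def letter_of_def split: act.splits\<close>)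
  then show ?thesis by (simp add: map_fst_pair_pmf)
qed

lemma act_outsider:
  assumes y: "y1 \<in> set_pmf (leader_mixed neg pos emp C l)" "y2 \<in> set_pmf (leader_mixed neg pos emp C l)"
    and i: "i \<notin> C" "i \<noteq> l"
  shows "actions E r emp (f(l := y1)) i = actions E r emp (f(l := y2)) i"
proof -
  obtain b1 c1 where 1: "y1 = LS C l b1 c1" using set_leader[OF y(1)] by blast
  obtain b2 c2 where 2: "y2 = LS C l b2 c2" using set_leader[OF y(2)] by blast
  have "recv_pub E r emp (f(l := y1)) i = recv_pub E r emp (f(l := y2)) i"
    unfolding recv_pub_def 1 2 by (auto simp: LS_def)
  moreover have "recv_priv E r emp (f(l := y1)) i = recv_priv E r emp (f(l := y2)) i"
    unfolding recv_priv_def 1 2 using i by (auto simp: LS_def)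
  ultimately show ?thesis unfolding actions_def using i by simp
qed

lemma central:
  assumes i: "i \<in> N" and C: "C \<in> P" "j \<in> C" and iC: "i \<notin> C"
  shows "map_pmf (\<lambda>s. actions E r emp s i \<noteq> actions E r emp s j) (profile_pmf N (\<sigma>(i:=\<tau>)))
         = pmf_of_set UNIV"
proof -
  define l where "l = ld C"
  define \<sigma>' where "\<sigma>' = \<sigma>(i:=\<tau>)"
  have l: "l \<in> C" "l \<in> N" "l \<noteq> i" "j \<noteq> i"
    using ldC[OF C(1)] CsubN[OF C(1)] iC C l_def by auto
  define L where "L = leader_mixed neg pos emp C l"
  have sl: "\<sigma>' l = L" using sig[OF C(1) l(1)] l L_def l_def \<sigma>'_def by simp
  obtain y0 where y0: "y0 \<in> set_pmf L" using set_pmf_not_empty[of L] by blast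
  define G where "G f = actions E r emp (f(l:=y0)) i" for f
  define Q where "Q = Pi_pmf (N-{l}) undefined \<sigma>'"
  have ins: "profile_pmf N \<sigma>' = map_pmf (\<lambda>(y,f). f(l:=y)) (pair_pmf L Q)"
    unfolding profile_pmf_def Q_def sl[symmetric]
    using Pi_pmf_insert[of "N-{l}" l undefined \<sigma>'] finN l by (simp add: insert_absorb)
  have "map_pmf (\<lambda>s. actions E r emp s i \<noteq> actions E r emp s j) (profile_pmf N \<sigma>')
      = map_pmf (\<lambda>(y,f). G f \<noteq> hb j y) (pair_pmf L Q)"
    unfolding ins pmf.map_comp
  proof (intro map_pmf_cong refl)
    fix x assume x: "x \<in> set_pmf (pair_pmf L Q)"
    obtain y f where x': "x = (y, f)" by (cases x)
    have y: "y \<in> set_pmf L" using x x' by auto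
    have s: "f(l:=y) \<in> set_pmf (profile_pmf N \<sigma>')" unfolding ins using x x' by force
    have "actions E r emp (f(l:=y)) j = hb j ((f(l:=y)) (ld C))"
      by (rule act_member[OF s C]) (use l l_def \<sigma>'_def in auto)
    moreover have "actions E r emp (f(l:=y)) i = G f"
      unfolding G_def using act_outsider[of y C l y0 i f] y y0 iC l L_def by auto
    ultimately show "((\<lambda>s. actions E r emp s i \<noteq> actions E r emp s j) \<circ> (\<lambda>(y, f). f(l := y))) x
        = (\<lambda>(y, f). G f \<noteq> hb j y) x" using x' l_def by simp
  qed
  also have "\<dots> = map_pmf (\<lambda>(b,g). g \<noteq> b) (map_pmf (\<lambda>(y,f). (hb j y, G f)) (pair_pmf L Q))"
    by (simp add: pmf.map_comp o_def case_prod_unfold)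
  also have "\<dots> = map_pmf (\<lambda>(b,g). g \<noteq> b) (pair_pmf coin (map_pmf G Q))"
    unfolding map_pair L_def using map_hb[OF C(2)] by simp
  also have "\<dots> = pmf_of_set UNIV" by (rule pair_coin_ne)
  finally show ?thesis unfolding \<sigma>'_def .
qed

lemma absdiff: "real_of_int \<bar>aval a - aval b\<bar> = (if a \<noteq> b then 2 else 0)"
  by (cases a; cases b) auto

lemma absdiff2: "\<bar>real_of_int (aval a) - real_of_int (aval b)\<bar> = (if a \<noteq> b then 2 else 0)"
  by (cases a; cases b) auto

lemma exp_other:
  assumes i: "i \<in> N" and C: "C \<in> P" "j \<in> C" and iC: "i \<notin> C"
  shows "measure_pmf.expectation (profile_pmf N (\<sigma>(i:=\<tau>)))
           (\<lambda>s. real_of_int \<bar>aval (actions E r emp s i) - aval (actions E r emp s j)\<bar>) = 1"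
proof -
  have "measure_pmf.expectation (profile_pmf N (\<sigma>(i:=\<tau>)))
           (\<lambda>s. real_of_int \<bar>aval (actions E r emp s i) - aval (actions E r emp s j)\<bar>)
      = measure_pmf.expectation (map_pmf (\<lambda>s. actions E r emp s i \<noteq> actions E r emp s j)
            (profile_pmf N (\<sigma>(i:=\<tau>)))) (\<lambda>d. if d then 2 else 0)"
    by (simp add: integral_map_pmf absdiff absdiff2)
  also have "\<dots> = 1" unfolding central[OF assms]
    by (subst integral_pmf_of_set) (auto simp: UNIV_bool)
  finally show ?thesis .
qed

lemma same_act:
  assumes s: "s \<in> set_pmf (profile_pmf N \<sigma>)" and C: "C \<in> P" "i \<in> C" "j \<in> C"
  shows "actions E r emp s i = actions E r emp s j"
proof -
  have l: "ld C \<in> C" "ld C \<in> N" using ldC[OF C(1)] CsubN[OF C(1)] by auto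
  have "s (ld C) \<in> set_pmf (\<sigma> (ld C))" using support[OF s l(2)] .
  then obtain b c where b: "s (ld C) = LS C (ld C) b c"
    using set_leader[of "s (ld C)" C "ld C"] sig[OF C(1) l(1)] by auto
  show ?thesis using act_member[OF s C(1,2)] act_member[OF s C(1,3)] b
    by (simp add: hb_def LS_def C)
qed

lemma exp_same:
  assumes C: "C \<in> P" "i \<in> C" "j \<in> C"
  shows "measure_pmf.expectation (profile_pmf N \<sigma>)
           (\<lambda>s. real_of_int \<bar>aval (actions E r emp s i) - aval (actions E r emp s j)\<bar>) = 0"
proof -
  have "measure_pmf.expectation (profile_pmf N \<sigma>)
           (\<lambda>s. real_of_int \<bar>aval (actions E r emp s i) - aval (actions E r emp s j)\<bar>)
      = measure_pmf.expectation (profile_pmf N \<sigma>) (\<lambda>s. 0)"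
    by (intro integral_cong_AE) (auto simp: AE_measure_pmf_iff same_act[OF _ C])
  then show ?thesis by simp
qed

lemma integ_abs: "integrable (measure_pmf p)
   (\<lambda>s. real_of_int \<bar>aval (actions E r emp s i) - aval (actions E r emp s j)\<bar>)"
  by (rule measure_pmf.integrable_const_bound[where B=2]) (auto simp: absdiff absdiff2)

lemma integ_ind: "integrable (measure_pmf p)
   (\<lambda>s. if actions E r emp s i \<noteq> actions E r emp s j then 1 else (0::real))"
  by (rule measure_pmf.integrable_const_bound[where B=1]) auto

lemma exp_util_eq: "exp_utility N E r emp \<sigma>' i = - (\<Sum>j\<in>nbrs E i.
   measure_pmf.expectation (profile_pmf N \<sigma>')
     (\<lambda>s. real_of_int \<bar>aval (actions E r emp s i) - aval (actions E r emp s j)\<bar>))"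
proof -
  have "measure_pmf.expectation (profile_pmf N \<sigma>') (\<lambda>s. \<Sum>j\<in>nbrs E i.
      real_of_int \<bar>aval (actions E r emp s i) - aval (actions E r emp s j)\<bar>)
    = (\<Sum>j\<in>nbrs E i. measure_pmf.expectation (profile_pmf N \<sigma>')
     (\<lambda>s. real_of_int \<bar>aval (actions E r emp s i) - aval (actions E r emp s j)\<bar>))"
    by (rule Bochner_Integration.integral_sum) (rule integ_abs)
  then show ?thesis unfolding exp_utility_def utility_def by (simp only: integral_minus)
qed

lemma nbrsN: "j \<in> nbrs E i \<Longrightarrow> j \<in> N"
  using G unfolding graph_def nbrs_def by auto

lemma equil: "equilibrium N E r emp \<sigma>"
  unfolding equilibrium_def
proof (intro ballI allI)
  fix i \<tau> assume i: "i \<in> N"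
  let ?e = "\<lambda>\<sigma>' j. measure_pmf.expectation (profile_pmf N \<sigma>')
     (\<lambda>s. real_of_int \<bar>aval (actions E r emp s i) - aval (actions E r emp s j)\<bar>)"
  have "?e \<sigma> j \<le> ?e (\<sigma>(i:=\<tau>)) j" if j: "j \<in> nbrs E i" for j
  proof -
    obtain C where C: "C \<in> P" "j \<in> C" using exC nbrsN[OF j] by blast
    show ?thesis
    proof (cases "i \<in> C")
      case True
      then show ?thesis using exp_same[OF C(1) True C(2)] by (simp add: integral_nonneg_AE)
    next
      case False
      show ?thesis using exp_other[OF i C False, of \<tau>] exp_other[OF i C False, of "\<sigma> i"] by simp
    qed
  qed
  then have "(\<Sum>j\<in>nbrs E i. ?e \<sigma> j) \<le> (\<Sum>j\<in>nbrs E i. ?e (\<sigma>(i:=\<tau>)) j)"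
    by (rule sum_mono)
  then show "exp_utility N E r emp (\<sigma>(i := \<tau>)) i \<le> exp_utility N E r emp \<sigma> i"
    unfolding exp_util_eq by simp
qed

lemma exp_pair:
  assumes e: "(a, b) \<in> E"
  shows "measure_pmf.expectation (profile_pmf N \<sigma>)
     (\<lambda>s. if actions E r emp s a \<noteq> actions E r emp s b then 1 else (0::real))
     = (if (a, b) \<in> cut_edges E P then 1/2 else 0)"
proof -
  have N: "a \<in> N" "b \<in> N" using e G unfolding graph_def by auto
  have "measure_pmf.expectation (profile_pmf N \<sigma>)
     (\<lambda>s. if actions E r emp s a \<noteq> actions E r emp s b then 1 else (0::real))
     = measure_pmf.expectation (profile_pmf N \<sigma>)
     (\<lambda>s. real_of_int \<bar>aval (actions E r emp s a) - aval (actions E r emp s b)\<bar>) / 2"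
  proof -
    have "(\<lambda>s. if actions E r emp s a \<noteq> actions E r emp s b then 1 else (0::real)) =
      (\<lambda>s. real_of_int \<bar>aval (actions E r emp s a) - aval (actions E r emp s b)\<bar> / 2)"
      by (rule ext) (simp only: absdiff, simp)
    then show ?thesis by simp
  qed
  also have "\<dots> = (if (a, b) \<in> cut_edges E P then 1/2 else 0)"
  proof (cases "(a, b) \<in> cut_edges E P")
    case True
    obtain C where C: "C \<in> P" "b \<in> C" using exC N by blast
    have "a \<notin> C" using True C unfolding cut_edges_def by auto
    then show ?thesis using exp_other[OF N(1) C, of "\<sigma> a"] True by simp
  next
    case False
    then obtain C where "C \<in> P" "a \<in> C" "b \<in> C" using e unfolding cut_edges_def by auto
    then show ?thesis using exp_same False by simp
  qed
  finally show ?thesis .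
qed

lemma ineff: "exp_inefficiency N E r emp \<sigma> = 2 / real (card E) * (real (card (cut_edges E P)) / 2)"
proof -
  have finE: "finite E" using G finN unfolding graph_def by (auto intro: finite_subset)
  have "exp_inefficiency N E r emp \<sigma> = 2 / real (card E) * (\<Sum>x\<in>E.
     measure_pmf.expectation (profile_pmf N \<sigma>)
     (\<lambda>s. if actions E r emp s (fst x) \<noteq> actions E r emp s (snd x) then 1 else (0::real)))"
    unfolding exp_inefficiency_def inefficiency_def case_prod_unfold
    by (simp add: Bochner_Integration.integral_sum integ_ind)
  also have "(\<Sum>x\<in>E. measure_pmf.expectation (profile_pmf N \<sigma>)
     (\<lambda>s. if actions E r emp s (fst x) \<noteq> actions E r emp s (snd x) then 1 else (0::real)))
     = (\<Sum>x\<in>E. if x \<in> cut_edges E P then 1/2 else 0)"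
    by (intro sum.cong refl) (use exp_pair in auto)
  also have "\<dots> = (\<Sum>x\<in>E \<inter> cut_edges E P. 1/2)"
    by (rule sum.inter_restrict[symmetric]) (rule finE)
  also have "E \<inter> cut_edges E P = cut_edges E P" unfolding cut_edges_def by auto
  finally show ?thesis by simp
qed

end

lemma neg_letter_of: "neg \<noteq> pos \<Longrightarrow> neg_letter neg pos (letter_of neg pos b) = letter_of neg pos (flip b)"
  by (cases b) (auto simp: neg_letter_def letter_of_def)

lemma neg_msgs_empty: "neg \<noteq> emp \<Longrightarrow> pos \<noteq> emp \<Longrightarrow>
  neg_msgs neg pos (\<lambda>_. empty_msg emp) = (\<lambda>_. empty_msg emp)"
  by (simp add: neg_msgs_def neg_msg_empty)

lemma neg_msgs_leader: "neg \<noteq> pos \<Longrightarrow> neg \<noteq> emp \<Longrightarrow> pos \<noteq> emp \<Longrightarrow>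
  neg_msgs neg pos (\<lambda>j. if j \<in> C then letter_msg emp (letter_of neg pos b) else empty_msg emp)
  = (\<lambda>j. if j \<in> C then letter_msg emp (letter_of neg pos (flip b)) else empty_msg emp)"
  by (auto simp: neg_msgs_def neg_msg_empty neg_msg_letter neg_letter_of)

lemma sym_follower:
  assumes np: "neg \<noteq> pos" and ne: "neg \<noteq> emp" and pe: "pos \<noteq> emp"
  shows "map_pmf (iota neg pos) (follower_mixed neg pos emp l) = follower_mixed neg pos emp l"
proof -
  define f where "f c = \<lparr> pub = empty_msg emp, priv = (\<lambda>_. empty_msg emp),
                     out = follow_rule neg pos emp l c \<rparr>" for c :: act
  have "iota neg pos \<circ> f = f \<circ> flip"
    by (rule ext) (simp add: f_def iota_def neg_msg_empty[OF ne pe] neg_msgs_empty[OF ne pe] flip_follow[OF np ne pe])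
  then have "map_pmf (iota neg pos) (map_pmf f coin) = map_pmf f (map_pmf flip coin)"
    by (simp add: pmf.map_comp)
  then show ?thesis unfolding follower_mixed_def f_def[symmetric] map_flip_coin .
qed

lemma sym_leader:
  assumes np: "neg \<noteq> pos" and ne: "neg \<noteq> emp" and pe: "pos \<noteq> emp"
  shows "map_pmf (iota neg pos) (leader_mixed neg pos emp C l) = leader_mixed neg pos emp C l"
proof -
  define f where "f = (\<lambda>(b, c). \<lparr> pub = empty_msg emp,
     priv = (\<lambda>j. if j \<in> C then letter_msg emp (letter_of neg pos b) else empty_msg emp),
     out = follow_rule neg pos emp l c \<rparr>)"
  have "iota neg pos \<circ> f = f \<circ> (\<lambda>(b, c). (flip b, flip c))"
    by (rule ext) (auto simp: f_def iota_def neg_msg_empty[OF ne pe] flip_follow[OF np ne pe]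
        neg_msgs_leader[OF np ne pe])
  then have "map_pmf (iota neg pos) (map_pmf f (pair_pmf coin coin))
     = map_pmf f (map_pmf (\<lambda>(b, c). (flip b, flip c)) (pair_pmf coin coin))"
    by (simp add: pmf.map_comp)
  also have "map_pmf (\<lambda>(b, c). (flip b, flip c)) (pair_pmf coin coin) = pair_pmf coin coin"
    by (simp add: map_pair map_flip_coin)
  finally show ?thesis unfolding leader_mixed_def f_def[symmetric] .
qed

theorem theorem1:
  fixes N :: "'a set" and E :: "('a \<times> 'a) set" and r :: nat and \<epsilon> :: real
    and neg pos emp :: "'l::finite"
  assumes "graph N E"
    and "neg \<noteq> pos" and "neg \<noteq> emp" and "pos \<noteq> emp"
    and "r \<ge> 1" and "\<epsilon> \<ge> 0"
    and "amenable N E \<epsilon> r"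
  shows "\<exists>P ld \<sigma>. leader_profile N E r neg pos emp P ld \<sigma>
           \<and> equilibrium N E r emp \<sigma>
           \<and> action_symmetric N neg pos \<sigma>
           \<and> exp_inefficiency N E r emp \<sigma> \<le> \<epsilon>"
proof -
  note G = assms(1) and np = assms(2) and ne = assms(3) and pe = assms(4)
  obtain P where part: "partition_on N P" and PC: "\<forall>C\<in>P. connected_set E C \<and> radius_le E r C"
    and cut: "real (card (cut_edges E P)) \<le> \<epsilon> * real (card E)"
    using assms(7) unfolding amenable_def by blast
  define ld where "ld C = (SOME l. l \<in> C \<and> C \<subseteq> ball E r l)" for C
  have ld: "ld C \<in> C \<and> C \<subseteq> ball E r (ld C)" if "C \<in> P" for C
  proof -
    have "\<exists>l. l \<in> C \<and> C \<subseteq> ball E r l" using PC that unfolding radius_le_def by blast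
    then show ?thesis unfolding ld_def by (rule someI_ex)
  qed
  define \<sigma> where "\<sigma> i = (let C = (THE C. C \<in> P \<and> i \<in> C) in
      if i = ld C then leader_mixed neg pos emp C i else follower_mixed neg pos emp (ld C))" for i
  have uniq: "C = C'" if "C \<in> P" "C' \<in> P" "i \<in> C" "i \<in> C'" for C C' i
    using part that unfolding partition_on_def disjoint_def by auto
  have the: "(THE C. C \<in> P \<and> i \<in> C) = C" if "C \<in> P" "i \<in> C" for C i
    using that uniq by (intro the_equality) auto
  have LP: "leader_profile N E r neg pos emp P ld \<sigma>"
    unfolding leader_profile_def using part ld by (auto simp: \<sigma>_def the)
  have eq: "equilibrium N E r emp \<sigma>" by (rule equil[OF G np ne pe LP])
  have sym: "action_symmetric N neg pos \<sigma>"
    unfolding action_symmetric_def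
  proof
    fix i assume "i \<in> N"
    then obtain C where C: "C \<in> P" "i \<in> C" using part unfolding partition_on_def by auto
    then show "map_pmf (iota neg pos) (\<sigma> i) = \<sigma> i"
      by (simp add: \<sigma>_def the sym_leader[OF np ne pe] sym_follower[OF np ne pe])
  qed
  have ie: "exp_inefficiency N E r emp \<sigma> \<le> \<epsilon>"
  proof (cases "card E = 0")
    case True then show ?thesis using ineff[OF G np ne pe LP] assms(6) by simp
  next
    case False
    then have pos: "real (card E) > 0" by simp
    have "real (card E) * exp_inefficiency N E r emp \<sigma> = real (card (cut_edges E P))"
      using ineff[OF G np ne pe LP] pos by simp
    also have "\<dots> \<le> real (card E) * \<epsilon>" using cut by (simp add: mult.commute)
    finally show ?thesis using pos by (rule mult_left_le_imp_le)
  qed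
  show ?thesis using LP eq sym ie by blast
qed

end
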